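(* Let $F\subsetneq K$ be fields of characteristic $t$, with $F$ a proper nonempty subfield of $K$. Let $p(x)=\sum_{k=0}^{n}a_k x^k\in K[x]$ be non-constant with $a_n\neq 0$, and let $q(x)=\sum_{j=0}^{m}b_j x^j\in K[x]\setminus F[x]$ with $b_m\neq 0$. Suppose $a_n,b_m\in F$ and $b_j\notin F$ for some $j\geq 1$. If $t\nmid n$, then $p\circ q\notin F[x]$ and $D_F(p\circ q)=D_F(q)$.
   Context: For sets $F\subset K$ and $p(x)=\sum_{k=0}^{n}a_kx^k\in K[x]$ with $a_n\neq 0$, the $F$ deficit $D_F(p)$ is defined as follows: if $p\in K[x]\setminus F[x]$, then $D_F(p)=n-\max\{0\le k\le n: a_k\notin F\}$; if $p\in F[x]$, then $D_F(p)=n$. Here $F[x]$ denotes the set of polynomials with all coefficients in $F$. *)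

theory Defs
  imports "HOL-Computational_Algebra.Polynomial"
begin

definition is_subfield :: "'a::field set \<Rightarrow> bool" where
  "is_subfield F \<longleftrightarrow> 0 \<in> F \<and> 1 \<in> F \<and>
     (\<forall>x\<in>F. \<forall>y\<in>F. x + y \<in> F \<and> x * y \<in> F) \<and>
     (\<forall>x\<in>F. - x \<in> F) \<and> (\<forall>x\<in>F. x \<noteq> 0 \<longrightarrow> inverse x \<in> F)"

definition poly_over :: "'a::zero set \<Rightarrow> 'a poly set" where
  "poly_over F = {p. \<forall>i. coeff p i \<in> F}"

definition deficit :: "'a::zero set \<Rightarrow> 'a poly \<Rightarrow> nat" where
  "deficit F p = (if p \<in> poly_over F then degree p
     else degree p - Max {k. k \<le> degree p \<and> coeff p k \<notin> F})"

end

theory Submission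
  imports Defs
begin

lemma pcompose_monom_gen: "pcompose (monom a n) q = smult a (q ^ n)"
  by (induction n) (simp_all add: monom_0 monom_Suc pcompose_pCons)

lemma subfield_sum:
  assumes "is_subfield F" "\<And>i. i \<in> A \<Longrightarrow> f i \<in> F"
  shows "sum f A \<in> F"
  using assms(2)
proof (induction A rule: infinite_finite_induct)
  case (infinite A) then show ?case using assms(1) by (simp add: is_subfield_def)
next
  case empty then show ?case using assms(1) by (simp add: is_subfield_def)
next
  case (insert x A) then show ?case using assms(1) by (simp add: is_subfield_def)
qed

lemma poly_over_mult:
  assumes "is_subfield F" "p \<in> poly_over F" "q \<in> poly_over F"
  shows "p * q \<in> poly_over F"
  unfolding poly_over_def mem_Collect_eq
proof (rule allI)
  fix n
  show "coeff (p * q) n \<in> F"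
    unfolding coeff_mult
    by (rule subfield_sum[OF assms(1)])
       (use assms in \<open>auto simp: poly_over_def is_subfield_def\<close>)
qed

lemma poly_over_power:
  assumes "is_subfield F" "p \<in> poly_over F"
  shows "p ^ k \<in> poly_over F"
proof (induction k)
  case 0 then show ?case using assms(1)
    by (auto simp: poly_over_def is_subfield_def coeff_1)
next
  case (Suc k) then show ?case using poly_over_mult[OF assms(1) assms(2)] by simp
qed

lemma err_bound:
  fixes h g :: "'a::field poly"
  assumes "degree h = m" "degree g \<le> r" "r < m"
  shows "degree ((h+g)^(k+2) - h^(k+2) - of_nat (k+2) * h^(k+1) * g) \<le> k*m + 2*r"
proof (induction k)
  case 0
  have "(h+g)^(0+2) - h^(0+2) - of_nat (0+2) * h^(0+1) * g = g^2"
    by (simp add: power2_eq_square algebra_simps)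
  moreover have "degree (g^2) \<le> 2*r"
    using degree_power_le[of g 2] assms by simp
  ultimately show ?case by simp
next
  case (Suc k)
  define E where "E = (h+g)^(k+2) - h^(k+2) - of_nat (k+2) * h^(k+1) * g"
  have eq: "(h+g)^(Suc k+2) - h^(Suc k+2) - of_nat (Suc k+2) * h^(Suc k+1) * g
      = (h+g) * E + of_nat (k+2) * h^(k+1) * g^2"
    unfolding E_def by (simp add: algebra_simps power2_eq_square)
  have dhg: "degree (h+g) \<le> m" using assms by (intro degree_add_le) auto
  have d1: "degree ((h+g) * E) \<le> Suc k * m + 2*r"
    using degree_mult_le[of "h+g" E] dhg Suc.IH unfolding E_def by simp
  have dof: "degree (of_nat (k+2) :: 'a poly) = 0"
    by (simp add: of_nat_poly)
  have "degree (of_nat (k+2) * h^(k+1) * g^2) \<le> 0 + (k+1)*m + 2*r"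
  proof -
    have "degree (of_nat (k+2) * h^(k+1) * g^2) \<le> degree (of_nat (k+2) * h^(k+1)) + degree (g^2)"
      by (rule degree_mult_le)
    also have "\<dots> \<le> (degree (of_nat (k+2) :: 'a poly) + degree (h^(k+1))) + degree (g^2)"
      using degree_mult_le by (intro add_mono) auto
    also have "\<dots> \<le> 0 + (k+1)*m + 2*r"
      using dof degree_power_le[of h "k+1"] degree_power_le[of g 2] assms
      by (intro add_mono) (auto simp: mult.commute)
    finally show ?thesis .
  qed
  then have d2: "degree (of_nat (k+2) * h^(k+1) * g^2) \<le> Suc k * m + 2*r" by simp
  show ?case unfolding eq by (rule degree_add_le[OF d1 d2])
qed


lemma of_nat_mult_poly: "(of_nat n :: 'a::field poly) * X = smult (of_nat n) X"
  by (simp add: of_nat_poly)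

theorem theorem27:
  fixes F :: "'a::field set" and p q :: "'a poly"
  assumes "is_subfield F" and "F \<noteq> UNIV"
    and "degree p \<ge> 1"
    and "q \<notin> poly_over F"
    and "lead_coeff p \<in> F" and "lead_coeff q \<in> F"
    and "\<exists>j\<ge>1. coeff q j \<notin> F"
    and "\<not> CHAR('a) dvd degree p"
  shows "pcompose p q \<notin> poly_over F \<and> deficit F (pcompose p q) = deficit F q"
proof -
  note sf = assms(1)[unfolded is_subfield_def]
  have F0: "0 \<in> F" and F1: "1 \<in> F" and Fadd: "\<And>x y. x \<in> F \<Longrightarrow> y \<in> F \<Longrightarrow> x + y \<in> F"
    and Fmul: "\<And>x y. x \<in> F \<Longrightarrow> y \<in> F \<Longrightarrow> x * y \<in> F"
    and Fneg: "\<And>x. x \<in> F \<Longrightarrow> - x \<in> F"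
    and Finv: "\<And>x. x \<in> F \<Longrightarrow> x \<noteq> 0 \<Longrightarrow> inverse x \<in> F"
    using sf by auto
  have Fdiff: "\<And>x y. x \<in> F \<Longrightarrow> y \<in> F \<Longrightarrow> x - y \<in> F"
    using Fadd Fneg by (metis diff_conv_add_uminus)
  have Fpow: "\<And>x k. x \<in> F \<Longrightarrow> x ^ k \<in> F"
  proof -
    fix x :: 'a and k :: nat assume "x \<in> F"
    then show "x ^ k \<in> F" by (induction k) (auto intro: Fmul F1)
  qed
  have Fnat: "\<And>k. (of_nat k :: 'a) \<in> F"
  proof -
    fix k show "(of_nat k :: 'a) \<in> F" by (induction k) (auto intro: Fadd F0 F1)
  qed
  define n where "n = degree p"
  define m where "m = degree q"
  define an where "an = lead_coeff p"
  define bm where "bm = lead_coeff q"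
  define S where "S = {k. k \<le> m \<and> coeff q k \<notin> F}"
  define r where "r = Max S"
  have q0: "q \<noteq> 0" using assms(4) F0 by (auto simp: poly_over_def)
  have bm0: "bm \<noteq> 0" using q0 by (simp add: bm_def)
  have an0: "an \<noteq> 0" using assms(3) by (auto simp: an_def n_def)
  obtain j where j: "j \<ge> 1" "coeff q j \<notin> F" using assms(7) by auto
  have "j \<le> m" using j F0 coeff_eq_0[of q j] unfolding m_def by (cases "j \<le> degree q") auto
  then have jS: "j \<in> S" using j by (auto simp: S_def)
  have finS: "finite S" by (auto simp: S_def)
  have rS: "r \<in> S" unfolding r_def using finS jS by (intro Max_in) auto
  have "j \<le> r" unfolding r_def using finS jS by simp
  then have r1: "r \<ge> 1" using j by simp
  have "r \<noteq> m" using rS assms(6) by (auto simp: S_def m_def)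
  then have rm: "r < m" using rS by (auto simp: S_def)
  have br: "coeff q r \<notin> F" using rS by (auto simp: S_def)
  have above: "\<And>k. k > r \<Longrightarrow> coeff q k \<in> F"
  proof -
    fix k assume "k > r"
    show "coeff q k \<in> F"
    proof (cases "k \<le> m")
      case True
      show ?thesis
      proof (rule ccontr)
        assume "coeff q k \<notin> F"
        then have "k \<in> S" using True by (simp add: S_def)
        then have "k \<le> r" unfolding r_def using finS by simp
        then show False using \<open>k > r\<close> by simp
      qed
    next
      case False
      then show ?thesis using F0 coeff_eq_0[of q k] by (simp add: m_def)
    qed
  qed
  define g where "g = poly_cutoff (Suc r) q"
  define h where "h = q - g"
  have cg: "\<And>k. coeff g k = (if k \<le> r then coeff q k else 0)"
    by (simp add: g_def coeff_poly_cutoff)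
  have ch: "\<And>k. coeff h k = (if k \<le> r then 0 else coeff q k)"
    by (simp add: h_def cg)
  have hF: "h \<in> poly_over F" using ch above F0 by (auto simp: poly_over_def)
  have qhg: "q = h + g" by (simp add: h_def)
  have dg: "degree g = r"
  proof (rule antisym)
    show "degree g \<le> r" by (rule degree_le) (auto simp: cg)
    show "r \<le> degree g" using br F0 by (intro le_degree) (auto simp: cg)
  qed
  have chm: "coeff h m = bm" using rm ch by (simp add: bm_def m_def)
  have dh: "degree h = m"
  proof (rule antisym)
    show "degree h \<le> m" by (rule degree_le) (auto simp: ch m_def coeff_eq_0)
    show "m \<le> degree h" using chm bm0 by (intro le_degree) auto
  qed
  have h0: "h \<noteq> 0" using dh rm by auto
  have lch: "lead_coeff h = bm" using dh chm by simp
  define p' where "p' = p - monom an n"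
  have dp': "degree p' \<le> n - 1"
    by (rule degree_le) (auto simp: p'_def coeff_monom an_def n_def coeff_eq_0)
  have pq: "pcompose p q = smult an (q ^ n) + pcompose p' q"
  proof -
    have "p = monom an n + p'" by (simp add: p'_def)
    then have "pcompose p q = pcompose (monom an n) q + pcompose p' q"
      by (metis pcompose_add)
    then show ?thesis by (simp add: pcompose_monom_gen)
  qed
  define d where "d = (n - 1) * m + r"
  have n1: "n \<ge> 1" using assms(3) by (simp add: n_def)
  have dlow: "degree (pcompose p' q) < d"
  proof -
    have "degree (pcompose p' q) \<le> degree p' * degree q" by (rule degree_pcompose_le)
    also have "\<dots> \<le> (n - 1) * m" using dp' by (simp add: m_def)
    finally show ?thesis using r1 by (simp add: d_def)
  qed
  define E where "E = (h+g)^n - h^n - of_nat n * h^(n-1) * g"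
  have Ez: "\<And>i. i \<ge> d \<Longrightarrow> coeff E i = 0"
  proof -
    fix i assume "i \<ge> d"
    show "coeff E i = 0"
    proof (cases "n = 1")
      case True
      then show ?thesis by (simp add: E_def)
    next
      case False
      then obtain k where k: "n = k + 2" using n1 by (metis add_2_eq_Suc' le_neq_implies_less less_imp_Suc_add Suc_eq_plus1 add.commute nat_less_le one_add_one)
      have "degree E \<le> k*m + 2*r" unfolding E_def k using err_bound[OF dh, where g=g and r=r and k=k] dg rm by simp
      also have "\<dots> < d" using rm by (simp add: d_def k algebra_simps)
      finally show ?thesis using \<open>i \<ge> d\<close> by (intro coeff_eq_0) simp
    qed
  qed
  have qn: "q ^ n = h^n + smult (of_nat n) (h^(n-1) * g) + E"
    by (simp add: E_def qhg of_nat_mult_poly[symmetric] mult.assoc)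
  have dhg: "degree (h^(n-1) * g) \<le> d"
    using degree_mult_le[of "h^(n-1)" g] degree_power_eq[OF h0, of "n-1"] dh dg
    by (simp add: d_def mult.commute)
  have chgd: "coeff (h^(n-1) * g) d = bm^(n-1) * coeff q r"
  proof -
    have "coeff (h^(n-1) * g) (degree (h^(n-1)) + degree g) = lead_coeff (h^(n-1)) * lead_coeff g"
      by (rule coeff_mult_degree_sum)
    moreover have "degree (h^(n-1)) + degree g = d"
      using degree_power_eq[OF h0, of "n-1"] dh dg by (simp add: d_def)
    ultimately show ?thesis using lead_coeff_power[of h "n-1"] lch dg cg by simp
  qed
  have cpq: "\<And>i. i \<ge> d \<Longrightarrow> coeff (pcompose p q) i
      = an * coeff (h^n) i + an * (of_nat n * coeff (h^(n-1) * g) i)"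
    using Ez dlow by (simp add: pq qn coeff_eq_0 algebra_simps)
  have hnF: "\<And>i. coeff (h^n) i \<in> F"
    using poly_over_power[OF assms(1) hF, of n] by (simp add: poly_over_def)
  have anF: "an \<in> F" using assms(5) by (simp add: an_def)
  have bmF: "bm \<in> F" using assms(6) by (simp add: bm_def)
  have nz: "(of_nat n :: 'a) \<noteq> 0" using assms(8) by (simp add: of_nat_eq_0_iff_char_dvd n_def)
  have hi: "\<And>i. i > d \<Longrightarrow> coeff (pcompose p q) i \<in> F"
  proof -
    fix i assume "i > d"
    then have "coeff (h^(n-1) * g) i = 0" using dhg by (intro coeff_eq_0) simp
    then show "coeff (pcompose p q) i \<in> F" using cpq[of i] \<open>i > d\<close> hnF anF Fmul by simp
  qed
  have atd: "coeff (pcompose p q) d \<notin> F"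
  proof
    assume A: "coeff (pcompose p q) d \<in> F"
    define c where "c = an * of_nat n * bm^(n-1)"
    have cF: "c \<in> F" unfolding c_def using anF bmF Fnat Fpow Fmul by auto
    have c0: "c \<noteq> 0" unfolding c_def using an0 bm0 nz by simp
    have "c * coeff q r = coeff (pcompose p q) d - an * coeff (h^n) d"
      using cpq[of d] chgd by (simp add: c_def algebra_simps)
    also have "\<dots> \<in> F" using A hnF anF Fmul Fdiff by auto
    finally have "inverse c * (c * coeff q r) \<in> F" using Finv[OF cF c0] Fmul by auto
    then show False using c0 br by (simp add: mult.assoc[symmetric])
  qed
  have degpq: "degree (pcompose p q) = n * m" by (simp add: degree_pcompose n_def m_def)
  have dle: "d \<le> n * m" using rm n1
    by (cases n) (auto simp: d_def)
  have notF: "pcompose p q \<notin> poly_over F" using atd by (auto simp: poly_over_def)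
  have Mx: "Max {k. k \<le> degree (pcompose p q) \<and> coeff (pcompose p q) k \<notin> F} = d"
  proof (rule Max_eqI)
    show "finite {k. k \<le> degree (pcompose p q) \<and> coeff (pcompose p q) k \<notin> F}" by (rule finite_subset[of _ "{..degree (pcompose p q)}"]) auto
    show "d \<in> {k. k \<le> degree (pcompose p q) \<and> coeff (pcompose p q) k \<notin> F}"
      using atd dle degpq by simp
    fix y assume "y \<in> {k. k \<le> degree (pcompose p q) \<and> coeff (pcompose p q) k \<notin> F}"
    then have "coeff (pcompose p q) y \<notin> F" by simp
    then have "\<not> y > d" using hi by blast
    then show "y \<le> d" by simp
  qed
  have dq: "deficit F q = m - r"
    using assms(4) by (simp add: deficit_def m_def r_def S_def)
  have "deficit F (pcompose p q) = n * m - d"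
    using notF Mx degpq by (simp add: deficit_def)
  also have "\<dots> = m - r"
  proof -
    obtain n0 where "n = Suc n0" using n1 by (cases n) auto
    then have "n * m = n0 * m + m" "d = n0 * m + r" by (simp_all add: d_def)
    then show ?thesis by simp
  qed
  finally show ?thesis using notF dq by simp
qed

end
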